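(* Let $M^2$ be a surface in $\mathbb E^4$ without flat points, i.e. $(k,\varkappa)\neq(0,0)$ at every point. Then at any point $p$ the mean curvature vector $H=\frac12\operatorname{tr}\sigma$ vanishes if and only if $\varkappa^2-k=0$ at $p$. In particular, $M^2$ is minimal if and only if $\varkappa^2-k=0$ on $M^2$.
   Context: $\mathbb E^4$ carries the standard metric $g$. For a surface $M^2$ parametrized by $z(u,v)$, with $E=g(z_u,z_u)$, $F=g(z_u,z_v)$, $G=g(z_v,z_v)$, $W=\sqrt{EG-F^2}$, second fundamental form $\sigma$, and an orthonormal normal frame $\{e_1,e_2\}$, write $\sigma(z_u,z_u)=c_{11}^1e_1+c_{11}^2e_2$, $\sigma(z_u,z_v)=c_{12}^1e_1+c_{12}^2e_2$, $\sigma(z_v,z_v)=c_{22}^1e_1+c_{22}^2e_2$; put $\Delta_1=c_{11}^1c_{12}^2-c_{11}^2c_{12}^1$, $\Delta_2=c_{11}^1c_{22}^2-c_{11}^2c_{22}^1$, $\Delta_3=c_{12}^1c_{22}^2-c_{12}^2c_{22}^1$, $L=2\Delta_1/W$, $M=\Delta_2/W$, $N=2\Delta_3/W$, and $k=\frac{LN-M^2}{EG-F^2}$, $\varkappa=\frac{EN+GL-2FM}{2(EG-F^2)}$ (these are independent of parametrization and normal frame, $\varkappa$ up to sign). A point is flat if $k=\varkappa=0$. *)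

theory Defs
  imports "HOL-Analysis.Analysis"
begin

definition pu :: "(real \<times> real \<Rightarrow> 'a::real_normed_vector) \<Rightarrow> real \<times> real \<Rightarrow> 'a" where
  "pu f p = vector_derivative (\<lambda>t. f (t, snd p)) (at (fst p))"

definition pv :: "(real \<times> real \<Rightarrow> 'a::real_normed_vector) \<Rightarrow> real \<times> real \<Rightarrow> 'a" where
  "pv f p = vector_derivative (\<lambda>t. f (fst p, t)) (at (snd p))"

definition has_partials :: "(real \<times> real) set \<Rightarrow> (real \<times> real \<Rightarrow> 'a::real_normed_vector) \<Rightarrow> bool" where
  "has_partials U f \<longleftrightarrow> (\<forall>p\<in>U. (\<lambda>t. f (t, snd p)) differentiable (at (fst p))
                              \<and> (\<lambda>t. f (fst p, t)) differentiable (at (snd p)))"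

definition C2_param :: "(real \<times> real) set \<Rightarrow> (real \<times> real \<Rightarrow> real^4) \<Rightarrow> bool" where
  "C2_param U z \<longleftrightarrow> open U \<and> has_partials U z \<and> has_partials U (pu z) \<and> has_partials U (pv z)
     \<and> continuous_on U z \<and> continuous_on U (pu z) \<and> continuous_on U (pv z)
     \<and> continuous_on U (pu (pu z)) \<and> continuous_on U (pv (pu z))
     \<and> continuous_on U (pu (pv z)) \<and> continuous_on U (pv (pv z))"

definition EE :: "(real \<times> real \<Rightarrow> real^4) \<Rightarrow> real \<times> real \<Rightarrow> real" where
  "EE z p = pu z p \<bullet> pu z p"
definition FF :: "(real \<times> real \<Rightarrow> real^4) \<Rightarrow> real \<times> real \<Rightarrow> real" where
  "FF z p = pu z p \<bullet> pv z p"
definition GG :: "(real \<times> real \<Rightarrow> real^4) \<Rightarrow> real \<times> real \<Rightarrow> real" where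
  "GG z p = pv z p \<bullet> pv z p"
definition WW :: "(real \<times> real \<Rightarrow> real^4) \<Rightarrow> real \<times> real \<Rightarrow> real" where
  "WW z p = sqrt (EE z p * GG z p - (FF z p)\<^sup>2)"

definition regular_surface :: "(real \<times> real) set \<Rightarrow> (real \<times> real \<Rightarrow> real^4) \<Rightarrow> bool" where
  "regular_surface U z \<longleftrightarrow> C2_param U z \<and> (\<forall>p\<in>U. EE z p * GG z p - (FF z p)\<^sup>2 > 0)"

definition normal_frame :: "(real \<times> real) set \<Rightarrow> (real \<times> real \<Rightarrow> real^4) \<Rightarrow>
    (real \<times> real \<Rightarrow> real^4) \<Rightarrow> (real \<times> real \<Rightarrow> real^4) \<Rightarrow> bool" where
  "normal_frame U z e1 e2 \<longleftrightarrow> (\<forall>p\<in>U. e1 p \<bullet> e1 p = 1 \<and> e2 p \<bullet> e2 p = 1 \<and> e1 p \<bullet> e2 p = 0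
      \<and> e1 p \<bullet> pu z p = 0 \<and> e1 p \<bullet> pv z p = 0 \<and> e2 p \<bullet> pu z p = 0 \<and> e2 p \<bullet> pv z p = 0)"

definition normal_part :: "(real \<times> real \<Rightarrow> real^4) \<Rightarrow> (real \<times> real \<Rightarrow> real^4) \<Rightarrow>
    real \<times> real \<Rightarrow> real^4 \<Rightarrow> real^4" where
  "normal_part e1 e2 p X = (X \<bullet> e1 p) *\<^sub>R e1 p + (X \<bullet> e2 p) *\<^sub>R e2 p"

definition sigma11 where "sigma11 z e1 e2 p = normal_part e1 e2 p (pu (pu z) p)"
definition sigma12 where "sigma12 z e1 e2 p = normal_part e1 e2 p (pv (pu z) p)"
definition sigma22 where "sigma22 z e1 e2 p = normal_part e1 e2 p (pv (pv z) p)"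

definition c11_1 where "c11_1 z e1 e2 p = sigma11 z e1 e2 p \<bullet> e1 p"
definition c11_2 where "c11_2 z e1 e2 p = sigma11 z e1 e2 p \<bullet> e2 p"
definition c12_1 where "c12_1 z e1 e2 p = sigma12 z e1 e2 p \<bullet> e1 p"
definition c12_2 where "c12_2 z e1 e2 p = sigma12 z e1 e2 p \<bullet> e2 p"
definition c22_1 where "c22_1 z e1 e2 p = sigma22 z e1 e2 p \<bullet> e1 p"
definition c22_2 where "c22_2 z e1 e2 p = sigma22 z e1 e2 p \<bullet> e2 p"

definition Delta1 where "Delta1 z e1 e2 p = c11_1 z e1 e2 p * c12_2 z e1 e2 p - c11_2 z e1 e2 p * c12_1 z e1 e2 p"
definition Delta2 where "Delta2 z e1 e2 p = c11_1 z e1 e2 p * c22_2 z e1 e2 p - c11_2 z e1 e2 p * c22_1 z e1 e2 p"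
definition Delta3 where "Delta3 z e1 e2 p = c12_1 z e1 e2 p * c22_2 z e1 e2 p - c12_2 z e1 e2 p * c22_1 z e1 e2 p"

definition LL where "LL z e1 e2 p = 2 * Delta1 z e1 e2 p / WW z p"
definition MM where "MM z e1 e2 p = Delta2 z e1 e2 p / WW z p"
definition NN where "NN z e1 e2 p = 2 * Delta3 z e1 e2 p / WW z p"

definition curv_k :: "(real \<times> real \<Rightarrow> real^4) \<Rightarrow> (real \<times> real \<Rightarrow> real^4) \<Rightarrow>
    (real \<times> real \<Rightarrow> real^4) \<Rightarrow> real \<times> real \<Rightarrow> real" where
  "curv_k z e1 e2 p = (LL z e1 e2 p * NN z e1 e2 p - (MM z e1 e2 p)\<^sup>2)
                       / (EE z p * GG z p - (FF z p)\<^sup>2)"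

definition curv_kappa :: "(real \<times> real \<Rightarrow> real^4) \<Rightarrow> (real \<times> real \<Rightarrow> real^4) \<Rightarrow>
    (real \<times> real \<Rightarrow> real^4) \<Rightarrow> real \<times> real \<Rightarrow> real" where
  "curv_kappa z e1 e2 p = (EE z p * NN z e1 e2 p + GG z p * LL z e1 e2 p - 2 * FF z p * MM z e1 e2 p)
                       / (2 * (EE z p * GG z p - (FF z p)\<^sup>2))"

text \<open>Mean curvature vector H = (1/2) tr sigma, the trace taken w.r.t. the induced metric
  (inverse metric g^{ij} = [[G,-F],[-F,E]]/(EG-F^2)).\<close>
definition mean_curv :: "(real \<times> real \<Rightarrow> real^4) \<Rightarrow> (real \<times> real \<Rightarrow> real^4) \<Rightarrow>
    (real \<times> real \<Rightarrow> real^4) \<Rightarrow> real \<times> real \<Rightarrow> real^4" where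
  "mean_curv z e1 e2 p = (1 / (2 * (EE z p * GG z p - (FF z p)\<^sup>2))) *\<^sub>R
      (GG z p *\<^sub>R sigma11 z e1 e2 p - (2 * FF z p) *\<^sub>R sigma12 z e1 e2 p + EE z p *\<^sub>R sigma22 z e1 e2 p)"

definition flat_point where
  "flat_point z e1 e2 p \<longleftrightarrow> curv_k z e1 e2 p = 0 \<and> curv_kappa z e1 e2 p = 0"

end

theory Submission
  imports Defs
begin


lemma alg:
  fixes E F G W a1 b1 a2 b2 a3 b3 :: real
  assumes D: "E*G - F^2 > 0" and E: "E \<ge> 0" and W: "W = sqrt (E*G - F^2)"
  defines "x \<equiv> a1*b2 - b1*a2" and "y \<equiv> a1*b3 - b1*a3" and "w \<equiv> a2*b3 - b2*a3"
  defines "k \<equiv> ((2*x/W)*(2*w/W) - (y/W)^2)/(E*G-F^2)"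
      and "kap \<equiv> (E*(2*w/W) + G*(2*x/W) - 2*F*(y/W))/(2*(E*G-F^2))"
  assumes nf: "\<not> (k = 0 \<and> kap = 0)"
  shows "(G*a1 - 2*F*a2 + E*a3 = 0 \<and> G*b1 - 2*F*b2 + E*b3 = 0) \<longleftrightarrow> kap^2 - k = 0"
proof -
  define D where "D = E*G - F^2"
  have Dp: "D > 0" using D D_def by simp
  have Ep: "E > 0" using D E by (smt (verit) mult_nonneg_nonneg zero_le_power2 mult_eq_0_iff)
  have Wp: "W > 0" using W Dp D_def by simp
  have W2: "W^2 = D" using W Dp D_def by simp
  define Q where "Q = (E*w + G*x - F*y)^2 - D*(4*x*w - y^2)"
  have kap': "kap = (E*w + G*x - F*y)/(D*W)" unfolding kap_def D_def[symmetric] using Wp Dp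
    by (simp add: field_simps)
  have k': "k = (4*x*w - y^2)/(D*W^2)" unfolding k_def D_def[symmetric] using Wp Dp
    by (simp add: field_simps power2_eq_square)
  have kq: "kap^2 - k = Q / (D^2 * W^2)"
  proof -
    have "kap^2 - k = (E*w + G*x - F*y)^2/(D^2*W^2) - (4*x*w - y^2)*D/(D^2*W^2)"
      unfolding kap' k' using Wp Dp W2 by (simp add: field_simps power2_eq_square)
    also have "\<dots> = Q/(D^2*W^2)" unfolding Q_def by (simp add: diff_divide_distrib)
    finally show ?thesis .
  qed
  have sos: "E^2 * Q = (E*(E*w - G*x) - F*(E*y - 2*F*x))^2 + D*(E*y - 2*F*x)^2"
    unfolding Q_def D_def by (simp add: algebra_simps power2_eq_square)
  have kq0: "kap^2 - k = 0 \<longleftrightarrow> Q = 0" using kq Wp Dp by simp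
  show ?thesis
  proof
    assume H: "G*a1 - 2*F*a2 + E*a3 = 0 \<and> G*b1 - 2*F*b2 + E*b3 = 0"
    have a3: "a3 = (2*F*a2 - G*a1)/E" and b3: "b3 = (2*F*b2 - G*b1)/E" using H Ep by (simp_all add: field_simps)
    have "E*y = 2*F*x" unfolding x_def y_def a3 b3 using Ep by (simp add: field_simps)
    moreover have "E*w = G*x" unfolding x_def w_def a3 b3 using Ep by (simp add: field_simps)
    ultimately have "E^2*Q = 0" unfolding sos by simp
    then show "kap^2 - k = 0" using kq0 Ep by simp
  next
    assume "kap^2 - k = 0"
    then have Q0: "Q = 0" using kq0 by simp
    have l2: "E*y - 2*F*x = 0"
    proof -
      have "(E*(E*w - G*x) - F*(E*y - 2*F*x))^2 + D*(E*y - 2*F*x)^2 = 0" using sos Q0 by simp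
      then have "D*(E*y - 2*F*x)^2 = 0" by (smt (verit) zero_le_power2 Dp mult_nonneg_nonneg)
      then show ?thesis using Dp by simp
    qed
    have l1: "E*w - G*x = 0"
    proof -
      have "(E*(E*w - G*x) - F*(E*y - 2*F*x))^2 + D*(E*y - 2*F*x)^2 = 0" using sos Q0 by simp
      then have "(E*(E*w - G*x))^2 = 0" using l2 by simp
      then show ?thesis using Ep by simp
    qed
    have "kap \<noteq> 0" using nf \<open>kap^2 - k = 0\<close> by auto
    then have "E*w + G*x - F*y \<noteq> 0" unfolding kap' by auto
    then have "E*(E*w + G*x - F*y) \<noteq> 0" using Ep by simp
    moreover have "E*(E*w + G*x - F*y) = 2*D*x"
      proof -
      have "E*(E*w + G*x - F*y) = (E*w)*E + G*x*E - F*(E*y)" by (simp add: algebra_simps)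
      also have "\<dots> = 2*(E*G - F^2)*x" using l1 l2 by (simp add: algebra_simps power2_eq_square)
      finally show ?thesis by (simp add: D_def)
    qed
    ultimately have x0: "x \<noteq> 0" by simp
    define X1 where "X1 = G*a1 - 2*F*a2 + E*a3"
    define X2 where "X2 = G*b1 - 2*F*b2 + E*b3"
    have e1: "X1*b2 - X2*a2 = 0" using l1 unfolding X1_def X2_def x_def w_def by (simp add: algebra_simps)
    have e2: "a1*X2 - b1*X1 = 0" using l2 unfolding X1_def X2_def x_def y_def by (simp add: algebra_simps)
    have "X1 * x = 0" unfolding x_def using e1 e2 by (smt (verit) mult.commute mult.left_commute right_diff_distrib)
    moreover have "X2 * x = 0" unfolding x_def using e1 e2 by (smt (verit) mult.commute mult.left_commute right_diff_distrib)
    ultimately show "G*a1 - 2*F*a2 + E*a3 = 0 \<and> G*b1 - 2*F*b2 + E*b3 = 0"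
      using x0 X1_def X2_def by simp
  qed
qed

lemma np_dot:
  assumes "e1 p \<bullet> e1 p = 1" "e2 p \<bullet> e2 p = 1" "e1 p \<bullet> e2 p = 0"
  shows "normal_part e1 e2 p X \<bullet> e1 p = X \<bullet> e1 p" "normal_part e1 e2 p X \<bullet> e2 p = X \<bullet> e2 p"
proof -
  have "e2 p \<bullet> e1 p = 0" using assms(3) by (simp add: inner_commute)
  then show "normal_part e1 e2 p X \<bullet> e1 p = X \<bullet> e1 p" "normal_part e1 e2 p X \<bullet> e2 p = X \<bullet> e2 p"
    using assms unfolding normal_part_def by (simp_all add: inner_add_left)
qed

lemma pointwise:
  fixes z e1 e2 :: "real \<times> real \<Rightarrow> real^4"
  assumes D: "EE z p * GG z p - (FF z p)\<^sup>2 > 0"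
    and o: "e1 p \<bullet> e1 p = 1" "e2 p \<bullet> e2 p = 1" "e1 p \<bullet> e2 p = 0"
    and nf: "\<not> flat_point z e1 e2 p"
  shows "mean_curv z e1 e2 p = 0 \<longleftrightarrow> (curv_kappa z e1 e2 p)\<^sup>2 - curv_k z e1 e2 p = 0"
proof -
  define E where "E = EE z p" define F where "F = FF z p" define G where "G = GG z p"
  define a1 where "a1 = c11_1 z e1 e2 p" define b1 where "b1 = c11_2 z e1 e2 p"
  define a2 where "a2 = c12_1 z e1 e2 p" define b2 where "b2 = c12_2 z e1 e2 p"
  define a3 where "a3 = c22_1 z e1 e2 p" define b3 where "b3 = c22_2 z e1 e2 p"
  have E0: "E \<ge> 0" unfolding E_def EE_def by simp
  have s11: "sigma11 z e1 e2 p = a1 *\<^sub>R e1 p + b1 *\<^sub>R e2 p"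
    unfolding a1_def b1_def c11_1_def c11_2_def sigma11_def np_dot[of e1 p e2, OF o]
    by (simp add: normal_part_def)
  have s12: "sigma12 z e1 e2 p = a2 *\<^sub>R e1 p + b2 *\<^sub>R e2 p"
    unfolding a2_def b2_def c12_1_def c12_2_def sigma12_def np_dot[of e1 p e2, OF o]
    by (simp add: normal_part_def)
  have s22: "sigma22 z e1 e2 p = a3 *\<^sub>R e1 p + b3 *\<^sub>R e2 p"
    unfolding a3_def b3_def c22_1_def c22_2_def sigma22_def np_dot[of e1 p e2, OF o]
    by (simp add: normal_part_def)
  define V where "V = G *\<^sub>R sigma11 z e1 e2 p - (2 * F) *\<^sub>R sigma12 z e1 e2 p + E *\<^sub>R sigma22 z e1 e2 p"
  have V: "V = (G*a1 - 2*F*a2 + E*a3) *\<^sub>R e1 p + (G*b1 - 2*F*b2 + E*b3) *\<^sub>R e2 p"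
    unfolding V_def s11 s12 s22 by (simp add: algebra_simps scaleR_add_right)
  have "mean_curv z e1 e2 p = 0 \<longleftrightarrow> V = 0"
    unfolding mean_curv_def V_def E_def F_def G_def using D by auto
  also have "\<dots> \<longleftrightarrow> (G*a1 - 2*F*a2 + E*a3 = 0 \<and> G*b1 - 2*F*b2 + E*b3 = 0)"
  proof
    assume "V = 0"
    then have "V \<bullet> e1 p = 0" "V \<bullet> e2 p = 0" by simp_all
    then show "G*a1 - 2*F*a2 + E*a3 = 0 \<and> G*b1 - 2*F*b2 + E*b3 = 0"
      unfolding V using o inner_commute[of "e2 p" "e1 p"] by (simp add: inner_add_left inner_add_right)
  qed (simp add: V)
  also have "\<dots> \<longleftrightarrow> (curv_kappa z e1 e2 p)\<^sup>2 - curv_k z e1 e2 p = 0"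
    using alg[of E G F "WW z p" a1 b2 b1 a2 b3 a3] D E0 nf
    unfolding curv_kappa_def curv_k_def flat_point_def LL_def MM_def NN_def Delta1_def Delta2_def Delta3_def
      E_def F_def G_def a1_def a2_def a3_def b1_def b2_def b3_def WW_def
    by simp
  finally show ?thesis .
qed


theorem proposition4p1:
  fixes U :: "(real \<times> real) set" and z e1 e2 :: "real \<times> real \<Rightarrow> real^4"
  assumes "regular_surface U z"
    and "normal_frame U z e1 e2"
    and "\<forall>p\<in>U. \<not> flat_point z e1 e2 p"
  shows "(\<forall>p\<in>U. mean_curv z e1 e2 p = 0 \<longleftrightarrow> (curv_kappa z e1 e2 p)\<^sup>2 - curv_k z e1 e2 p = 0)
       \<and> ((\<forall>p\<in>U. mean_curv z e1 e2 p = 0) \<longleftrightarrow> (\<forall>p\<in>U. (curv_kappa z e1 e2 p)\<^sup>2 - curv_k z e1 e2 p = 0))"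
proof -
  have "\<forall>p\<in>U. mean_curv z e1 e2 p = 0 \<longleftrightarrow> (curv_kappa z e1 e2 p)\<^sup>2 - curv_k z e1 e2 p = 0"
  proof
    fix p assume p: "p \<in> U"
    show "mean_curv z e1 e2 p = 0 \<longleftrightarrow> (curv_kappa z e1 e2 p)\<^sup>2 - curv_k z e1 e2 p = 0"
      apply (rule pointwise)
      using assms p unfolding regular_surface_def normal_frame_def by auto
  qed
  then show ?thesis by blast
qed

end
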